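(* Let $n\in\mathbb{N}$ and let $E$ be a normed space over $\mathbb{K}\in\{\mathbb{R},\mathbb{C}\}$ of infinite (algebraic) dimension $\lambda$. Then each of the following sets is $2^\lambda$-lineable: (i) the set of unbounded $n$-linear forms $E^n\to\mathbb{K}$; (ii) the set of unbounded symmetric $n$-linear forms $E^n\to\mathbb{K}$; (iii) the set of unbounded $n$-homogeneous polynomials $E\to\mathbb{K}$; (iv) the set of unbounded polynomials $E\to\mathbb{K}$ of degree at most $n$.
   Context: "Unbounded" means not bounded on the closed unit ball of $E$ (for an $n$-linear form $L$: $\sup\{|L(x_1,\ldots,x_n)|:\|x_i\|\le1\}=\infty$). A map $P:E\to\mathbb{K}$ is an $n$-homogeneous polynomial if $P(x)=L(x,\ldots,x)$ for some symmetric $n$-linear (not necessarily continuous) $L:E^n\to\mathbb{K}$; a polynomial of degree at most $n$ is a sum $P_0+P_1+\cdots+P_n$ with $P_0$ constant and $P_k$ $k$-homogeneous. For a cardinal $\mu$, a set $M$ of functions is $\mu$-lineable if $M\cup\{0\}$ contains a vector space of dimension $\mu$. *)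

theory Defs
  imports "HOL-Analysis.Analysis" "HOL-Library.Equipollence" "HOL-Library.Function_Algebras"
begin

text \<open>The carrier
  type 'a carries its real normed structure; sc is the 'k-scalar multiplication,
  compatible with the real one and with the norm.\<close>
definition normed_space_over :: "('k::real_normed_field \<Rightarrow> 'a::real_normed_vector \<Rightarrow> 'a) \<Rightarrow> bool" where
  "normed_space_over sc \<longleftrightarrow> Vector_Spaces.vector_space sc
     \<and> (\<forall>c x. norm (sc c x) = norm c * norm x)
     \<and> (\<forall>r x. sc (of_real r) x = r *\<^sub>R x)"

definition hamel_basis :: "('k::field \<Rightarrow> 'a::ab_group_add \<Rightarrow> 'a) \<Rightarrow> 'a set \<Rightarrow> bool" where
  "hamel_basis sc B \<longleftrightarrow> \<not> module.dependent sc B \<and> module.span sc B = UNIV"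

text \<open>Maps E^n \<rightarrow> 'k are represented as maps (nat \<Rightarrow> 'a) \<Rightarrow> 'k depending only on the
  first n coordinates.\<close>
definition multilinear_form :: "('k::field \<Rightarrow> 'a::ab_group_add \<Rightarrow> 'a) \<Rightarrow> nat \<Rightarrow> ((nat \<Rightarrow> 'a) \<Rightarrow> 'k) \<Rightarrow> bool" where
  "multilinear_form sc n L \<longleftrightarrow>
     (\<forall>x y. (\<forall>i<n. x i = y i) \<longrightarrow> L x = L y)
     \<and> (\<forall>i<n. \<forall>x. Vector_Spaces.linear sc (*) (\<lambda>v. L (x(i := v))))"

definition symmetric_form :: "nat \<Rightarrow> ((nat \<Rightarrow> 'a) \<Rightarrow> 'k) \<Rightarrow> bool" where
  "symmetric_form n L \<longleftrightarrow> (\<forall>x \<sigma>. \<sigma> permutes {..<n} \<longrightarrow> L (x \<circ> \<sigma>) = L x)"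

definition unbounded_form :: "nat \<Rightarrow> ((nat \<Rightarrow> 'a::real_normed_vector) \<Rightarrow> 'k::real_normed_field) \<Rightarrow> bool" where
  "unbounded_form n L \<longleftrightarrow> \<not> (\<exists>C. \<forall>x. (\<forall>i<n. norm (x i) \<le> 1) \<longrightarrow> norm (L x) \<le> C)"

definition unbounded_fun :: "('a::real_normed_vector \<Rightarrow> 'k::real_normed_field) \<Rightarrow> bool" where
  "unbounded_fun P \<longleftrightarrow> \<not> (\<exists>C. \<forall>x. norm x \<le> 1 \<longrightarrow> norm (P x) \<le> C)"

definition homogeneous_poly :: "('k::field \<Rightarrow> 'a::ab_group_add \<Rightarrow> 'a) \<Rightarrow> nat \<Rightarrow> ('a \<Rightarrow> 'k) \<Rightarrow> bool" where
  "homogeneous_poly sc n P \<longleftrightarrow>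
     (\<exists>L. multilinear_form sc n L \<and> symmetric_form n L \<and> P = (\<lambda>x. L (\<lambda>_. x)))"

definition poly_deg_le :: "('k::field \<Rightarrow> 'a::ab_group_add \<Rightarrow> 'a) \<Rightarrow> nat \<Rightarrow> ('a \<Rightarrow> 'k) \<Rightarrow> bool" where
  "poly_deg_le sc n P \<longleftrightarrow>
     (\<exists>Ps. (\<forall>k\<le>n. homogeneous_poly sc k (Ps k)) \<and> P = (\<lambda>x. \<Sum>k\<le>n. Ps k x))"

text \<open>mu-lineability (mu given as the cardinality of a set I) of a set M of 'k-valued
  functions: M \<union> {0} contains a 'k-vector space of dimension |I|, i.e. the span of a
  linearly independent family F with F equipotent to I.\<close>
definition lineable_card :: "'i set \<Rightarrow> ('d \<Rightarrow> 'k::field) set \<Rightarrow> bool" where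
  "lineable_card I M \<longleftrightarrow>
     (\<exists>F. F \<approx> I \<and> \<not> module.dependent (\<lambda>c f x. c * f x) F
          \<and> module.span (\<lambda>c f x. c * f x) F \<subseteq> M \<union> {0})"

definition thm33_concl :: "('k::real_normed_field \<Rightarrow> 'a::real_normed_vector \<Rightarrow> 'a) \<Rightarrow> nat \<Rightarrow> 'a set \<Rightarrow> bool" where
  "thm33_concl sc n B \<longleftrightarrow>
     lineable_card (Pow B) {L :: (nat \<Rightarrow> 'a) \<Rightarrow> 'k. multilinear_form sc n L \<and> unbounded_form n L}
   \<and> lineable_card (Pow B) {L :: (nat \<Rightarrow> 'a) \<Rightarrow> 'k. multilinear_form sc n L \<and> symmetric_form n L \<and> unbounded_form n L}
   \<and> lineable_card (Pow B) {P :: 'a \<Rightarrow> 'k. homogeneous_poly sc n P \<and> unbounded_fun P}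
   \<and> lineable_card (Pow B) {P :: 'a \<Rightarrow> 'k. poly_deg_le sc n P \<and> unbounded_fun P}"

end

theory Submission imports Defs begin
lemma sum_fun_apply: "(\<Sum>a\<in>t. h a) (x::'d) = (\<Sum>a\<in>t. h a x)"
  by (induction t rule: infinite_finite_induct) auto

lemma inj_times_inf:
  assumes "infinite (A::'a set)"
  shows "\<exists>p. inj_on p (A \<times> A) \<and> p ` (A \<times> A) \<subseteq> A"
proof -
  have "(card_of (A \<times> A), card_of A) \<in> ordIso" using card_of_Times_same_infinite assms by blast
  hence "(card_of (A \<times> A), card_of A) \<in> ordLeq" using ordIso_iff_ordLeq by blast
  thus ?thesis using card_of_ordLeq by blast
qed

lemma lists_inj_inf:
  assumes inf: "infinite (A::'a set)"
  shows "\<exists>j. inj_on j (lists A) \<and> j ` lists A \<subseteq> A"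
proof -
  obtain p where p: "inj_on p (A \<times> A)" "p ` (A \<times> A) \<subseteq> A" using inj_times_inf[OF inf] by blast
  obtain q :: "nat \<Rightarrow> 'a" where q: "inj q" "range q \<subseteq> A" using infinite_countable_subset[OF inf] by blast
  define r where "r = rec_list (q 0) (\<lambda>x xs v. p (x, v))"
  have r0: "r [] = q 0" and rC: "\<And>x xs. r (x # xs) = p (x, r xs)" by (simp_all add: r_def)
  have rA: "r xs \<in> A" if "xs \<in> lists A" for xs
    using that proof (induction xs)
    case Nil then show ?case using q by (auto simp: r0)
  next
    case (Cons a xs) then show ?case using p by (auto simp: rC)
  qed
  have rinj: "\<And>ys. length xs = length ys \<Longrightarrow> xs \<in> lists A \<Longrightarrow> ys \<in> lists A \<Longrightarrow> r xs = r ys \<Longrightarrow> xs = ys" for xs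
  proof (induction xs)
    case Nil then show ?case by simp
  next
    case (Cons a xs ys)
    then obtain b zs where ys: "ys = b # zs" by (cases ys) auto
    have "p (a, r xs) = p (b, r zs)" using Cons.prems by (simp add: ys rC)
    moreover have "(a, r xs) \<in> A \<times> A" "(b, r zs) \<in> A \<times> A" using Cons.prems rA by (auto simp: ys)
    ultimately have "a = b" "r xs = r zs" using p(1) by (auto dest: inj_onD)
    then show ?case using Cons by (auto simp: ys)
  qed
  define j where "j xs = p (q (length xs), r xs)" for xs
  have "inj_on j (lists A)"
  proof (rule inj_onI)
    fix xs ys assume xs: "xs \<in> lists A" and ys: "ys \<in> lists A" and e: "j xs = j ys"
    have "(q (length xs), r xs) \<in> A \<times> A" "(q (length ys), r ys) \<in> A \<times> A" using q rA xs ys by auto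
    then have "q (length xs) = q (length ys)" "r xs = r ys" using e p(1) unfolding j_def by (auto dest: inj_onD)
    then show "xs = ys" using rinj xs ys q(1) by (auto dest: injD)
  qed
  moreover have "j ` lists A \<subseteq> A"
  proof
    fix y assume "y \<in> j ` lists A"
    then obtain xs where "xs \<in> lists A" "y = j xs" by blast
    then have "(q (length xs), r xs) \<in> A \<times> A" using q rA by auto
    then show "y \<in> A" using p(2) \<open>y = j xs\<close> unfolding j_def by blast
  qed
  ultimately show ?thesis by blast
qed

lemma module_fun: "module (\<lambda>c (f::'d \<Rightarrow> 'k::field) x. c * f x)"
  by unfold_locales (auto simp: fun_eq_iff algebra_simps)

lemma vs_field: "Vector_Spaces.vector_space ((*) :: 'k::field \<Rightarrow> 'k \<Rightarrow> 'k)"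
  by unfold_locales (auto simp: algebra_simps)

lemma lineable_generic:
  fixes Phi :: "'i \<Rightarrow> 'd \<Rightarrow> 'k::field"
  assumes H: "\<And>t c. finite t \<Longrightarrow> t \<subseteq> I \<Longrightarrow> (\<lambda>x. \<Sum>S\<in>t. c S * Phi S x) \<in> M \<union> {0}"
    and N: "\<And>t c S. finite t \<Longrightarrow> t \<subseteq> I \<Longrightarrow> S \<in> t \<Longrightarrow> c S \<noteq> 0 \<Longrightarrow> (\<lambda>x. \<Sum>S\<in>t. c S * Phi S x) \<noteq> 0"
  shows "lineable_card I M"
proof -
  let ?sc = "\<lambda>c (f::'d \<Rightarrow> 'k) x. c * f x"
  have inj: "inj_on Phi I"
  proof (rule inj_onI, rule ccontr)
    fix S T assume S: "S \<in> I" and T: "T \<in> I" and e: "Phi S = Phi T" and ne: "S \<noteq> T"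
    have "(\<lambda>x. \<Sum>X\<in>{S,T}. (if X = S then 1 else -1) * Phi X x) \<noteq> 0"
      by (rule N[where S=S]) (use S T in auto)
    moreover have "(\<lambda>x. \<Sum>X\<in>{S,T}. (if X = S then 1 else -1) * Phi X x) = 0"
      using ne e by (auto simp: fun_eq_iff)
    ultimately show False by blast
  qed
  have eqp: "Phi ` I \<approx> I"
    using inj by (meson bij_betw_imageI eqpoll_def eqpoll_sym)
  have ind: "\<not> module.dependent ?sc (Phi ` I)"
  proof
    assume "module.dependent ?sc (Phi ` I)"
    then obtain t' u where t': "finite t'" "t' \<subseteq> Phi ` I" "(\<Sum>v\<in>t'. ?sc (u v) v) = 0" "\<exists>v\<in>t'. u v \<noteq> 0"
      unfolding module.dependent_explicit[OF module_fun] by blast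
    obtain t where t: "t \<subseteq> I" "finite t" "t' = Phi ` t" using finite_subset_image[OF t'(1,2)] by blast
    have it: "inj_on Phi t" using inj t(1) by (rule inj_on_subset)
    obtain S where S: "S \<in> t" "u (Phi S) \<noteq> 0" using t'(4) t(3) by blast
    have "(\<lambda>x. \<Sum>X\<in>t. u (Phi X) * Phi X x) \<noteq> 0"
      by (rule N[where c="\<lambda>X. u (Phi X)", OF t(2) t(1) S])
    moreover have "(\<lambda>x. \<Sum>X\<in>t. u (Phi X) * Phi X x) = (\<Sum>v\<in>t'. ?sc (u v) v)"
      by (auto simp: fun_eq_iff sum_fun_apply t(3) sum.reindex[OF it])
    ultimately show False using t'(3) by simp
  qed
  have sp: "module.span ?sc (Phi ` I) \<subseteq> M \<union> {0}"
  proof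
    fix y assume "y \<in> module.span ?sc (Phi ` I)"
    then obtain t' r where t': "finite t'" "t' \<subseteq> Phi ` I" "y = (\<Sum>v\<in>t'. ?sc (r v) v)"
      unfolding module.span_explicit[OF module_fun] by blast
    obtain t where t: "t \<subseteq> I" "finite t" "t' = Phi ` t" using finite_subset_image[OF t'(1,2)] by blast
    have it: "inj_on Phi t" using inj t(1) by (rule inj_on_subset)
    have "y = (\<lambda>x. \<Sum>X\<in>t. r (Phi X) * Phi X x)"
      by (auto simp: fun_eq_iff sum_fun_apply t(3) t'(3) sum.reindex[OF it])
    then show "y \<in> M \<union> {0}" using H[OF t(2) t(1)] by simp
  qed
  show ?thesis unfolding lineable_card_def using eqp ind sp by blast
qed

lemma lin_iffI:
  assumes "Vector_Spaces.vector_space sc"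
    and "\<And>x y. h (x + y) = h x + h y" and "\<And>c x. h (sc c x) = c * h x"
  shows "Vector_Spaces.linear sc ((*) :: 'k::field \<Rightarrow> 'k \<Rightarrow> 'k) h"
  using assms vs_field unfolding Vector_Spaces.linear_iff by blast

lemma lin_add: "Vector_Spaces.linear sc ((*) :: 'k::field \<Rightarrow> 'k \<Rightarrow> 'k) h \<Longrightarrow> h (x + y) = h x + h y"
  unfolding Vector_Spaces.linear_iff by blast

lemma lin_scale: "Vector_Spaces.linear sc ((*) :: 'k::field \<Rightarrow> 'k \<Rightarrow> 'k) h \<Longrightarrow> h (sc c x) = c * h x"
  unfolding Vector_Spaces.linear_iff by blast

lemma lin_vs: "Vector_Spaces.linear sc ((*) :: 'k::field \<Rightarrow> 'k \<Rightarrow> 'k) h \<Longrightarrow> Vector_Spaces.vector_space sc"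
  unfolding Vector_Spaces.linear_iff by blast

lemma lin_comb:
  assumes vs: "Vector_Spaces.vector_space sc"
    and "\<And>S. S \<in> t \<Longrightarrow> Vector_Spaces.linear sc ((*) :: 'k::field \<Rightarrow> 'k \<Rightarrow> 'k) (h S)"
  shows "Vector_Spaces.linear sc ((*) :: 'k \<Rightarrow> 'k \<Rightarrow> 'k) (\<lambda>v. \<Sum>S\<in>t. c S * h S v)"
proof (rule lin_iffI[OF vs])
  fix x y
  show "(\<Sum>S\<in>t. c S * h S (x + y)) = (\<Sum>S\<in>t. c S * h S x) + (\<Sum>S\<in>t. c S * h S y)"
    by (simp add: lin_add[OF assms(2)] distrib_left sum.distrib cong: sum.cong)
next
  fix a x
  show "(\<Sum>S\<in>t. c S * h S (sc a x)) = a * (\<Sum>S\<in>t. c S * h S x)"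
    by (simp add: lin_scale[OF assms(2)] sum_distrib_left mult.left_commute cong: sum.cong)
qed

lemma prod_upd:
  assumes "finite J" "i \<in> J"
  shows "(\<Prod>j\<in>J. h j ((x(i := v)) j)) = h i v * (\<Prod>j\<in>J-{i}. h j (x j))"
proof -
  have "(\<Prod>j\<in>J. h j ((x(i := v)) j)) = h i v * (\<Prod>j\<in>J-{i}. h j ((x(i := v)) j))"
    using prod.remove[OF assms, of "\<lambda>j. h j ((x(i := v)) j)"] by simp
  also have "(\<Prod>j\<in>J-{i}. h j ((x(i := v)) j)) = (\<Prod>j\<in>J-{i}. h j (x j))"
    by (rule prod.cong) auto
  finally show ?thesis .
qed

locale thm_setup =
  fixes sc :: "'k::real_normed_field \<Rightarrow> 'a::real_normed_vector \<Rightarrow> 'a" and B :: "'a set"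
  assumes ns: "normed_space_over sc" and hb: "hamel_basis sc B" and infB: "infinite B"
begin

lemma vs: "Vector_Spaces.vector_space sc" using ns unfolding normed_space_over_def by blast
lemma indB: "\<not> module.dependent sc B" using hb unfolding hamel_basis_def by blast
lemma nsc: "norm (sc c x) = norm c * norm x" using ns unfolding normed_space_over_def by blast
lemma vsp: "vector_space_pair sc ((*) :: 'k \<Rightarrow> 'k \<Rightarrow> 'k)"
  using vs vs_field by (simp add: vector_space_pair_def)
lemma B_nz: "b \<in> B \<Longrightarrow> b \<noteq> 0"
proof
  assume "b \<in> B" "b = 0"
  moreover have "module sc" using vs module_iff_vector_space by blast
  ultimately show False using indB module.dependent_zero by metis
qed

definition D :: "('a list \<times> 'a list list) set" where
  "D = {(xs, yss). set xs \<subseteq> B \<and> (\<forall>ys\<in>set yss. set ys \<subseteq> B)}"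

definition phi :: "'a set \<Rightarrow> 'a list \<times> 'a list list \<Rightarrow> 'k" where
  "phi S d = (if filter (\<lambda>x. x \<in> S) (fst d) \<in> set (snd d) then 1 else 0)"

lemma distinguish:
  assumes t: "finite t" "t \<subseteq> Pow B" and S0: "S0 \<in> t"
  shows "\<exists>d\<in>D. phi S0 d = 1 \<and> (\<forall>T\<in>t-{S0}. phi T d = 0)"
proof -
  have "\<forall>T\<in>t-{S0}. \<exists>x. x \<in> B \<and> (x \<in> S0 \<longleftrightarrow> x \<notin> T)"
  proof
    fix T assume T: "T \<in> t - {S0}"
    then have "T \<noteq> S0" "T \<subseteq> B" "S0 \<subseteq> B" using t S0 by auto
    then show "\<exists>x. x \<in> B \<and> (x \<in> S0 \<longleftrightarrow> x \<notin> T)" by blast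
  qed
  then obtain p where p: "\<And>T. T \<in> t-{S0} \<Longrightarrow> p T \<in> B \<and> (p T \<in> S0 \<longleftrightarrow> p T \<notin> T)"
    by metis
  obtain xs where xs: "set xs = p ` (t - {S0})" using finite_list[of "p ` (t - {S0})"] t by auto
  define d where "d = (xs, [filter (\<lambda>x. x \<in> S0) xs])"
  have "d \<in> D" using xs p by (auto simp: d_def D_def)
  moreover have "phi S0 d = 1" by (simp add: phi_def d_def)
  moreover have "phi T d = 0" if T: "T \<in> t-{S0}" for T
  proof -
    have "filter (\<lambda>x. x \<in> T) xs \<noteq> filter (\<lambda>x. x \<in> S0) xs"
    proof
      assume e: "filter (\<lambda>x. x \<in> T) xs = filter (\<lambda>x. x \<in> S0) xs"
      have "p T \<in> set xs" using xs T by auto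
      then have "p T \<in> set (filter (\<lambda>x. x \<in> T) xs) \<longleftrightarrow> p T \<in> set (filter (\<lambda>x. x \<in> S0) xs)"
        using e by simp
      then show False using p[OF T] \<open>p T \<in> set xs\<close> by auto
    qed
    then show ?thesis by (simp add: phi_def d_def)
  qed
  ultimately show ?thesis by blast
qed

lemma ex_iota: "\<exists>iota. inj_on iota (D \<times> (UNIV::nat set)) \<and> iota ` (D \<times> UNIV) \<subseteq> B"
proof -
  obtain j where j: "inj_on j (lists B)" "j ` lists B \<subseteq> B" using lists_inj_inf[OF infB] by blast
  obtain b0 where b0: "b0 \<in> B" using infB by (metis finite.emptyI ex_in_conv)
  define iota where "iota = (\<lambda>((xs::'a list, yss::'a list list), k::nat). j (j xs # j (map j yss) # replicate k b0))"
  have L1: "xs \<in> lists B" "map j yss \<in> lists B" if "(xs, yss) \<in> D" for xs yss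
  proof -
    show "xs \<in> lists B" using that by (auto simp: D_def)
    have "\<forall>ys\<in>set yss. ys \<in> lists B" using that by (auto simp: D_def)
    then show "map j yss \<in> lists B" using j(2) by (auto simp: image_subset_iff)
  qed
  have L2: "j xs # j (map j yss) # replicate k b0 \<in> lists B" if "(xs, yss) \<in> D" for xs yss k
    using L1[OF that] j(2) b0 by auto
  have "inj_on iota (D \<times> UNIV)"
  proof (rule inj_onI)
    fix a a' assume a: "a \<in> D \<times> UNIV" and a': "a' \<in> D \<times> UNIV" and ea: "iota a = iota a'"
    obtain xs yss k where aa: "a = ((xs, yss), k)" by (metis prod.collapse)
    obtain xs' yss' k' where aa': "a' = ((xs', yss'), k')" by (metis prod.collapse)
    have d: "(xs, yss) \<in> D" and d': "(xs', yss') \<in> D" using a a' aa aa' by auto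
    have e: "iota ((xs, yss), k) = iota ((xs', yss'), k')" using ea aa aa' by simp
    have "j xs # j (map j yss) # replicate k b0 = j xs' # j (map j yss') # replicate k' b0"
      using inj_onD[OF j(1) _ L2[OF d, of k] L2[OF d', of k']] e by (simp add: iota_def)
    then have e1: "j xs = j xs'" and e2: "j (map j yss) = j (map j yss')" and e3: "replicate k b0 = replicate k' b0"
      by auto
    have "xs = xs'" using e1 j(1) L1[OF d] L1[OF d'] by (auto dest: inj_onD)
    moreover have "map j yss = map j yss'" using e2 j(1) L1[OF d] L1[OF d'] by (auto dest: inj_onD)
    then have "yss = yss'"
    proof (rule map_inj_on)
      have "set yss \<union> set yss' \<subseteq> lists B" using d d' by (auto simp: D_def)
      then show "inj_on j (set yss \<union> set yss')" using j(1) by (rule inj_on_subset[rotated])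
    qed
    moreover have "k = k'" using e3 by (metis length_replicate)
    ultimately show "a = a'" using aa aa' by simp
  qed
  moreover have "iota ` (D \<times> UNIV) \<subseteq> B"
    using L2 j(2) by (auto simp: iota_def)
  ultimately show ?thesis by blast
qed

end

locale thm_setup2 = thm_setup sc B
  for sc :: "'k::real_normed_field \<Rightarrow> 'a::real_normed_vector \<Rightarrow> 'a" and B +
  fixes iota :: "('a list \<times> 'a list list) \<times> nat \<Rightarrow> 'a"
  assumes iinj: "inj_on iota (D \<times> UNIV)" and iB: "iota ` (D \<times> UNIV) \<subseteq> B"
begin

definition g :: "'a set \<Rightarrow> 'a \<Rightarrow> 'k" where
  "g S b = (if b \<in> iota ` (D \<times> UNIV) then
     (case inv_into (D \<times> UNIV) iota b of (d, k) \<Rightarrow> of_real (norm b) * of_nat k * phi S d) else 0)"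

definition f :: "'a set \<Rightarrow> 'a \<Rightarrow> 'k" where
  "f S = vector_space_pair.construct sc ((*) :: 'k \<Rightarrow> 'k \<Rightarrow> 'k) B (g S)"

definition u :: "'a \<Rightarrow> 'k" where
  "u = vector_space_pair.construct sc ((*) :: 'k \<Rightarrow> 'k \<Rightarrow> 'k) B (\<lambda>b. of_real (norm b))"

lemma lin_f: "Vector_Spaces.linear sc (*) (f S)"
  unfolding f_def by (rule vector_space_pair.linear_construct[OF vsp indB])

lemma lin_u: "Vector_Spaces.linear sc (*) u"
  unfolding u_def by (rule vector_space_pair.linear_construct[OF vsp indB])

lemma u_basis: "b \<in> B \<Longrightarrow> u b = of_real (norm b)"
  unfolding u_def by (rule vector_space_pair.construct_basis[OF vsp indB])

lemma f_iota:
  assumes d: "d \<in> D"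
  shows "f S (iota (d, k)) = of_real (norm (iota (d, k))) * of_nat k * phi S d"
proof -
  have dk: "(d, k) \<in> D \<times> UNIV" using d by simp
  have b: "iota (d, k) \<in> B" using iB dk by blast
  have "f S (iota (d, k)) = g S (iota (d, k))"
    unfolding f_def by (rule vector_space_pair.construct_basis[OF vsp indB b])
  also have "\<dots> = of_real (norm (iota (d, k))) * of_nat k * phi S d"
    using inv_into_f_f[OF iinj dk] dk by (simp add: g_def)
  finally show ?thesis .
qed

lemma core:
  assumes t: "finite t" "t \<subseteq> Pow B" and S0: "S0 \<in> t" "c S0 \<noteq> 0"
  shows "\<exists>e. norm e \<le> 1 \<and> u e = 1 \<and> C < norm (\<Sum>S\<in>t. c S * f S e)"
proof -
  obtain d where d: "d \<in> D" "phi S0 d = 1" "\<And>T. T \<in> t-{S0} \<Longrightarrow> phi T d = 0"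
    using distinguish[OF t S0(1)] by blast
  obtain k :: nat where k: "C / norm (c S0) < real k" using reals_Archimedean2 by blast
  define b where "b = iota (d, k)"
  have bB: "b \<in> B" using iB d(1) by (auto simp: b_def)
  have nb: "norm b > 0" using B_nz[OF bB] by simp
  define e where "e = sc (of_real (1 / norm b)) b"
  have ne: "norm e = 1" using nb by (simp add: e_def nsc norm_divide)
  have ue: "u e = 1" using nb by (simp add: e_def lin_scale[OF lin_u] u_basis[OF bB])
  have fe: "f S e = of_nat k * phi S d" for S
  proof -
    have "f S e = of_real (1 / norm b) * (of_real (norm b) * of_nat k * phi S d)"
      by (simp add: e_def lin_scale[OF lin_f] b_def f_iota[OF d(1)])
    also have "\<dots> = of_nat k * phi S d"
      using nb by (simp add: of_real_def field_simps)
    finally show ?thesis .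
  qed
  have "(\<Sum>S\<in>t. c S * f S e) = c S0 * f S0 e + (\<Sum>S\<in>t-{S0}. c S * f S e)"
    using sum.remove[OF t(1) S0(1)] by simp
  also have "(\<Sum>S\<in>t-{S0}. c S * f S e) = 0"
    by (rule sum.neutral) (simp add: fe d(3))
  finally have s: "(\<Sum>S\<in>t. c S * f S e) = c S0 * of_nat k"
    by (simp add: fe d(2))
  have "C < norm (c S0) * real k"
    using k S0(2) by (simp add: field_simps)
  then have "C < norm (\<Sum>S\<in>t. c S * f S e)"
    by (simp add: s norm_mult)
  then show ?thesis using ne ue by (intro exI[of _ e]) simp
qed


definition Lsym :: "nat \<Rightarrow> ('a \<Rightarrow> 'k) \<Rightarrow> (nat \<Rightarrow> 'a) \<Rightarrow> 'k" where
  "Lsym n F x = (\<Sum>l<n. \<Prod>j<n. (if j = l then F else u) (x j))"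

lemma Lsym_alt: "Lsym n F x = (\<Sum>l<n. F (x l) * (\<Prod>j\<in>{..<n}-{l}. u (x j)))"
  unfolding Lsym_def
proof (rule sum.cong[OF refl])
  fix l assume l: "l \<in> {..<n}"
  have "(\<Prod>j<n. (if j = l then F else u) (x j)) = F (x l) * (\<Prod>j\<in>{..<n}-{l}. (if j = l then F else u) (x j))"
    using prod.remove[OF finite_lessThan l, of "\<lambda>j. (if j = l then F else u) (x j)"] by simp
  also have "(\<Prod>j\<in>{..<n}-{l}. (if j = l then F else u) (x j)) = (\<Prod>j\<in>{..<n}-{l}. u (x j))"
    by (rule prod.cong) auto
  finally show "(\<Prod>j<n. (if j = l then F else u) (x j)) = F (x l) * (\<Prod>j\<in>{..<n}-{l}. u (x j))" .
qed

lemma Lsym_multi: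
  assumes F: "Vector_Spaces.linear sc (*) F"
  shows "multilinear_form sc n (Lsym n F)"
  unfolding multilinear_form_def
proof (intro conjI allI impI)
  fix x y :: "nat \<Rightarrow> 'a" assume "\<forall>i<n. x i = y i"
  then show "Lsym n F x = Lsym n F y" unfolding Lsym_def
    by (intro sum.cong prod.cong) auto
next
  fix i x assume i: "i < n"
  have eq: "(\<lambda>v. Lsym n F (x(i := v))) =
    (\<lambda>v. \<Sum>l\<in>{..<n}. (\<Prod>j\<in>{..<n}-{i}. (if j = l then F else u) (x j)) * (if i = l then F else u) v)"
  proof
    fix v
    show "Lsym n F (x(i := v)) = (\<Sum>l\<in>{..<n}. (\<Prod>j\<in>{..<n}-{i}. (if j = l then F else u) (x j)) * (if i = l then F else u) v)"
      unfolding Lsym_def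
      by (rule sum.cong[OF refl]) (subst prod_upd[of "{..<n}" i], use i in auto)
  qed
  show "Vector_Spaces.linear sc (*) (\<lambda>v. Lsym n F (x(i := v)))"
    unfolding eq by (rule lin_comb[OF vs]) (use F lin_u in auto)
qed

lemma Lsym_sym: "symmetric_form n (Lsym n F)"
  unfolding symmetric_form_def
proof (intro allI impI)
  fix x :: "nat \<Rightarrow> 'a" and \<sigma> assume p: "\<sigma> permutes {..<n}"
  have inj: "inj \<sigma>" using permutes_inj[OF p] .
  define G where "G l = (\<Prod>j<n. (if j = l then F else u) (x j))" for l
  have "(\<Prod>j<n. (if j = l then F else u) ((x \<circ> \<sigma>) j)) = G (\<sigma> l)" for l
  proof -
    have "G (\<sigma> l) = (\<Prod>j<n. (if \<sigma> j = \<sigma> l then F else u) (x (\<sigma> j)))"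
      unfolding G_def by (subst prod.permute[OF p]) (simp add: comp_def)
    also have "\<dots> = (\<Prod>j<n. (if j = l then F else u) ((x \<circ> \<sigma>) j))"
      using inj by (intro prod.cong) (auto dest: injD)
    finally show ?thesis by simp
  qed
  then have "Lsym n F (x \<circ> \<sigma>) = (\<Sum>l<n. G (\<sigma> l))" unfolding Lsym_def by simp
  also have "\<dots> = (\<Sum>l<n. G l)" using sum.permute[OF p, of G] by (simp add: comp_def)
  also have "\<dots> = Lsym n F x" unfolding Lsym_def G_def ..
  finally show "Lsym n F (x \<circ> \<sigma>) = Lsym n F x" .
qed

lemma Lsym_const: "u e = 1 \<Longrightarrow> Lsym n F (\<lambda>_. e) = of_nat n * F e"
  unfolding Lsym_alt by simp

lemma Lsym_comb:
  "(\<Sum>S\<in>t. c S * Lsym n (f S) x) = Lsym n (\<lambda>v. \<Sum>S\<in>t. c S * f S v) x"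
  unfolding Lsym_alt
  by (simp add: sum_distrib_left sum_distrib_right mult.assoc sum.swap[of _ t])

lemma comb_lin: "Vector_Spaces.linear sc (*) (\<lambda>v. \<Sum>S\<in>t. c S * f S v)"
  by (rule lin_comb[OF vs lin_f])

lemma comb_unb:
  assumes n: "n \<ge> 1" and t: "finite t" "t \<subseteq> Pow B" and S0: "S0 \<in> t" "c S0 \<noteq> 0"
  shows "unbounded_form n (Lsym n (\<lambda>v. \<Sum>S\<in>t. c S * f S v))"
    and "unbounded_fun (\<lambda>x. Lsym n (\<lambda>v. \<Sum>S\<in>t. c S * f S v) (\<lambda>_. x))"
proof -
  let ?F = "\<lambda>v. \<Sum>S\<in>t. c S * f S v"
  have key: "\<exists>e. norm e \<le> 1 \<and> C < norm (Lsym n ?F (\<lambda>_. e))" for C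
  proof -
    obtain e where e: "norm e \<le> 1" "u e = 1" "C < norm (?F e)" using core[where c=c and C=C, OF t S0] by blast
    have "norm (?F e) \<le> real n * norm (?F e)" using n by (simp add: mult_le_cancel_right1)
    then have "C < norm (Lsym n ?F (\<lambda>_. e))"
      using e(3) by (simp add: Lsym_const[OF e(2)] norm_mult)
    then show ?thesis using e(1) by blast
  qed
  show "unbounded_form n (Lsym n ?F)"
    unfolding unbounded_form_def
  proof
    assume "\<exists>C. \<forall>x. (\<forall>i<n. norm (x i) \<le> 1) \<longrightarrow> norm (Lsym n ?F x) \<le> C"
    then obtain C where C: "\<And>x. (\<forall>i<n. norm (x i) \<le> 1) \<Longrightarrow> norm (Lsym n ?F x) \<le> C" by blast
    obtain e where "norm e \<le> 1" "C < norm (Lsym n ?F (\<lambda>_. e))" using key by blast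
    then show False using C[of "\<lambda>_. e"] by simp
  qed
  show "unbounded_fun (\<lambda>x. Lsym n ?F (\<lambda>_. x))"
    unfolding unbounded_fun_def
  proof
    assume "\<exists>C. \<forall>x. norm x \<le> 1 \<longrightarrow> norm (Lsym n ?F (\<lambda>_. x)) \<le> C"
    then obtain C where C: "\<And>x. norm x \<le> 1 \<Longrightarrow> norm (Lsym n ?F (\<lambda>_. x)) \<le> C" by blast
    obtain e where "norm e \<le> 1" "C < norm (Lsym n ?F (\<lambda>_. e))" using key by blast
    then show False using C[of e] by simp
  qed
qed


lemma unb_nz: "unbounded_form n L \<Longrightarrow> L \<noteq> 0"
  unfolding unbounded_form_def by (auto simp: zero_fun_def)

lemma unbf_nz: "unbounded_fun P \<Longrightarrow> P \<noteq> 0"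
  unfolding unbounded_fun_def by (auto simp: zero_fun_def)

lemma comb_eq1: "(\<lambda>x. \<Sum>S\<in>t. c S * Lsym n (f S) x) = Lsym n (\<lambda>v. \<Sum>S\<in>t. c S * f S v)"
  by (rule ext) (rule Lsym_comb)

lemma comb_eq2: "(\<lambda>x. \<Sum>S\<in>t. c S * Lsym n (f S) (\<lambda>_. x)) = (\<lambda>x. Lsym n (\<lambda>v. \<Sum>S\<in>t. c S * f S v) (\<lambda>_. x))"
  by (rule ext) (rule Lsym_comb)

lemma zero_comb: "\<forall>S\<in>t. c S = 0 \<Longrightarrow> (\<lambda>x. \<Sum>S\<in>t. c S * (Phi S x :: 'k)) = 0"
  by (auto simp: fun_eq_iff)

lemma hom_zero: "homogeneous_poly sc k (\<lambda>_. 0)"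
proof -
  have "multilinear_form sc k (\<lambda>_. 0::'k)"
    unfolding multilinear_form_def by (auto intro!: lin_iffI[OF vs])
  moreover have "symmetric_form k (\<lambda>_. 0::'k)" unfolding symmetric_form_def by simp
  ultimately show ?thesis unfolding homogeneous_poly_def by blast
qed

lemma concl:
  assumes n: "n \<ge> 1"
  shows "thm33_concl sc n B"
proof -
  let ?Phi1 = "\<lambda>S. Lsym n (f S)"
  let ?Phi2 = "\<lambda>S x. Lsym n (f S) (\<lambda>_. x)"
  have N1: "(\<lambda>x. \<Sum>S\<in>t. c S * ?Phi1 S x) \<noteq> 0"
    if "finite t" "t \<subseteq> Pow B" "S \<in> t" "c S \<noteq> 0" for t c S
    unfolding comb_eq1 by (rule unb_nz, rule comb_unb(1)[where c=c, OF n that])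
  have N2: "(\<lambda>x. \<Sum>S\<in>t. c S * ?Phi2 S x) \<noteq> 0"
    if "finite t" "t \<subseteq> Pow B" "S \<in> t" "c S \<noteq> 0" for t c S
    unfolding comb_eq2 by (rule unbf_nz, rule comb_unb(2)[where c=c, OF n that])
  have H1: "(\<lambda>x. \<Sum>S\<in>t. c S * ?Phi1 S x) \<in>
      {L. multilinear_form sc n L \<and> symmetric_form n L \<and> unbounded_form n L} \<union> {0}"
    if t: "finite t" "t \<subseteq> Pow B" for t c
  proof (cases "\<exists>S\<in>t. c S \<noteq> 0")
    case True
    then obtain S where "S \<in> t" "c S \<noteq> 0" by blast
    then show ?thesis unfolding comb_eq1
      using Lsym_multi[OF comb_lin] Lsym_sym comb_unb(1)[where c=c, OF n t] by blast
  next
    case False then have "\<forall>S\<in>t. c S = 0" by blast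
    from zero_comb[OF this, of ?Phi1] show ?thesis by blast
  qed
  have H2: "(\<lambda>x. \<Sum>S\<in>t. c S * ?Phi2 S x) \<in>
      {P. homogeneous_poly sc n P \<and> poly_deg_le sc n P \<and> unbounded_fun P} \<union> {0}"
    if t: "finite t" "t \<subseteq> Pow B" for t c
  proof (cases "\<exists>S\<in>t. c S \<noteq> 0")
    case True
    then obtain S where S: "S \<in> t" "c S \<noteq> 0" by blast
    let ?F = "\<lambda>v. \<Sum>S\<in>t. c S * f S v"
    let ?P = "\<lambda>x. Lsym n ?F (\<lambda>_. x)"
    have hp: "homogeneous_poly sc n ?P"
      unfolding homogeneous_poly_def using Lsym_multi[OF comb_lin] Lsym_sym by blast
    have "poly_deg_le sc n ?P"
      unfolding poly_deg_le_def
    proof (intro exI conjI allI impI)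
      fix k assume "k \<le> n"
      show "homogeneous_poly sc k (if k = n then ?P else (\<lambda>_. 0))"
        using hp hom_zero by simp
    next
      show "?P = (\<lambda>x. \<Sum>k\<le>n. (if k = n then ?P else (\<lambda>_. 0)) x)"
      proof (rule ext)
        fix x
        have "(\<Sum>k\<le>n. (if k = n then ?P else (\<lambda>_. 0)) x) = (\<Sum>k\<le>n. if k = n then ?P x else 0)"
          by (rule sum.cong) auto
        then show "?P x = (\<Sum>k\<le>n. (if k = n then ?P else (\<lambda>_. 0)) x)" by simp
      qed
    qed
    then show ?thesis unfolding comb_eq2 using hp comb_unb(2)[where c=c, OF n t S] by blast
  next
    case False then have "\<forall>S\<in>t. c S = 0" by blast
    from zero_comb[OF this, of ?Phi2] show ?thesis by blast
  qed
  have L1: "lineable_card (Pow B) {L :: (nat \<Rightarrow> 'a) \<Rightarrow> 'k. multilinear_form sc n L \<and> unbounded_form n L}"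
    by (rule lineable_generic[where Phi="?Phi1"]) (use H1 N1 in blast)+
  have L2: "lineable_card (Pow B) {L :: (nat \<Rightarrow> 'a) \<Rightarrow> 'k. multilinear_form sc n L \<and> symmetric_form n L \<and> unbounded_form n L}"
    by (rule lineable_generic[where Phi="?Phi1"]) (use H1 N1 in blast)+
  have L3: "lineable_card (Pow B) {P :: 'a \<Rightarrow> 'k. homogeneous_poly sc n P \<and> unbounded_fun P}"
    by (rule lineable_generic[where Phi="?Phi2"]) (use H2 N2 in blast)+
  have L4: "lineable_card (Pow B) {P :: 'a \<Rightarrow> 'k. poly_deg_le sc n P \<and> unbounded_fun P}"
    by (rule lineable_generic[where Phi="?Phi2"]) (use H2 N2 in blast)+
  show ?thesis unfolding thm33_concl_def using L1 L2 L3 L4 by blast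
qed

end

lemma (in thm_setup) concl0: "n \<ge> 1 \<Longrightarrow> thm33_concl sc n B"
proof -
  assume n: "n \<ge> 1"
  obtain iota where "inj_on iota (D \<times> (UNIV::nat set))" "iota ` (D \<times> UNIV) \<subseteq> B"
    using ex_iota by blast
  then interpret t2: thm_setup2 sc B iota by unfold_locales
  show ?thesis by (rule t2.concl[OF n])
qed

theorem theorem3p3:
  fixes n :: nat
  assumes "n \<ge> 1"
  shows "(\<forall>(sc :: real \<Rightarrow> 'a::real_normed_vector \<Rightarrow> 'a) B.
            normed_space_over sc \<and> hamel_basis sc B \<and> infinite B
            \<longrightarrow> thm33_concl sc n B)
       \<and> (\<forall>(sc :: complex \<Rightarrow> 'b::real_normed_vector \<Rightarrow> 'b) B.
            normed_space_over sc \<and> hamel_basis sc B \<and> infinite B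
            \<longrightarrow> thm33_concl sc n B)"
proof (intro conjI allI impI)
  fix sc :: "real \<Rightarrow> 'a \<Rightarrow> 'a" and B
  assume "normed_space_over sc \<and> hamel_basis sc B \<and> infinite B"
  then interpret thm_setup sc B by unfold_locales auto
  show "thm33_concl sc n B" by (rule concl0[OF assms])
next
  fix sc :: "complex \<Rightarrow> 'b \<Rightarrow> 'b" and B
  assume "normed_space_over sc \<and> hamel_basis sc B \<and> infinite B"
  then interpret thm_setup sc B by unfold_locales auto
  show "thm33_concl sc n B" by (rule concl0[OF assms])
qed

end
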